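(* In the setting described in the context: (i) For all $\lambda,\mu\in\mathbb{R}^m$ and any point $x_\mu\in\mathbb{R}^n$, setting $\bar d(\mu):=\mathcal{L}_\beta(x_\mu;\mu)$ and $\nabla\bar d(\mu):=Ax_\mu-b$, we have $$d(\lambda)\le\bar d(\mu)+\langle\nabla\bar d(\mu),\lambda-\mu\rangle.$$ (ii) If $\{x^k\}$, $\{\lambda^k\}$ are generated by the IAL framework described in the context, then for every $k\ge1$, $$d(\lambda^{k+1})\ge\mathcal{L}_\beta(x^{k+1};\lambda^k)+\frac\beta2\|Ax^{k+1}-b\|^2-\eta_k.$$
   Context: Let $A\in\mathbb{R}^{m\times n}$ and $b\in\mathbb{R}^m$. Let $f:\mathbb{R}^n\to\mathbb{R}$ be convex and differentiable with Lipschitz continuous gradient. Let $g:\mathbb{R}^n\to\mathbb{R}\cup\{+\infty\}$ be a closed proper convex (possibly nonsmooth) function with bounded domain. Fix a penalty parameter $\beta>0$. For $\lambda\in\mathbb{R}^m$, define $$\hat f_\beta(x;\lambda):=f(x)+\langle\lambda,Ax-b\rangle+\tfrac{\beta}{2}\|Ax-b\|^2,\qquad \mathcal{L}_\beta(x;\lambda):=\hat f_\beta(x;\lambda)+g(x),$$ and $d(\lambda):=\min_{x\in\mathbb{R}^n}\mathcal{L}_\beta(x;\lambda)$. Here $\nabla\hat f_\beta(x;\lambda)$ denotes the gradient of $\hat f_\beta$ with respect to $x$. IAL framework: choose $x^1\in\operatorname{dom} g$, $\lambda^1\in\mathbb{R}^m$, and a nonnegative sequence $\{\eta_k\}$. For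 $k=1,2,\dots$: find a point $x^{k+1}$ such that $$\max_{x\in\mathbb{R}^n}\Big\{\langle\nabla\hat f_\beta(x^{k+1};\lambda^k),\,x^{k+1}-x\rangle+g(x^{k+1})-g(x)\Big\}\le\eta_k,$$ and then set $\lambda^{k+1}=\lambda^k+\beta(Ax^{k+1}-b)$. *)

theory Defs
  imports "HOL-Analysis.Analysis"
begin

text \<open>The extended-valued g : R^n -> R \<union> {+inf} is represented by its effective
  domain D (dom g) together with its (finite) values on D; outside D, g is +inf.\<close>

definition closed_proper_convex_bdd :: "('a::euclidean_space \<Rightarrow> real) \<Rightarrow> 'a set \<Rightarrow> bool" where
  "closed_proper_convex_bdd g D \<longleftrightarrow>
     D \<noteq> {} \<and> convex D \<and> convex_on D g \<and> bounded D \<and>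
     closed {(x, t). x \<in> D \<and> g x \<le> t}"

definition fhat :: "(real^'n \<Rightarrow> real) \<Rightarrow> real^'n^'m \<Rightarrow> real^'m \<Rightarrow> real \<Rightarrow> real^'m \<Rightarrow> real^'n \<Rightarrow> real" where
  "fhat f A b \<beta> lam x = f x + inner lam (A *v x - b) + \<beta> / 2 * (norm (A *v x - b))\<^sup>2"

definition Lag :: "(real^'n \<Rightarrow> real) \<Rightarrow> (real^'n \<Rightarrow> real) \<Rightarrow> real^'n^'m \<Rightarrow> real^'m \<Rightarrow> real \<Rightarrow> real^'m \<Rightarrow> real^'n \<Rightarrow> real" where
  "Lag f g A b \<beta> lam x = fhat f A b \<beta> lam x + g x"

text \<open>d(lam) = min over x of L_beta(x; lam); only x in dom g contribute (elsewhere L = +inf).\<close>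
definition dual :: "(real^'n \<Rightarrow> real) \<Rightarrow> (real^'n \<Rightarrow> real) \<Rightarrow> (real^'n) set \<Rightarrow> real^'n^'m \<Rightarrow> real^'m \<Rightarrow> real \<Rightarrow> real^'m \<Rightarrow> real" where
  "dual f g D A b \<beta> lam = Inf (Lag f g A b \<beta> lam ` D)"

end

theory Submission
  imports Defs
begin

lemma grad_ineq:
  fixes f :: "'a::real_normed_vector \<Rightarrow> real"
  assumes cf: "convex_on UNIV f" and d: "(f has_derivative f') (at x)"
  shows "f z - f x \<ge> f' (z - x)"
proof -
  define \<phi> where "\<phi> t = f (x + t *\<^sub>R (z - x))" for t :: real
  have cphi: "convex_on UNIV \<phi>"
  proof (rule convex_onI)
    fix u s t :: real assume "0 < u" "u < 1"
    have "x + ((1 - u) * s + u * t) *\<^sub>R (z - x) = (1 - u) *\<^sub>R (x + s *\<^sub>R (z - x)) + u *\<^sub>R (x + t *\<^sub>R (z - x))"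
      by (simp add: algebra_simps)
    note eq = this
    show "\<phi> ((1 - u) *\<^sub>R s + u *\<^sub>R t) \<le> (1 - u) * \<phi> s + u * \<phi> t"
      unfolding \<phi>_def using convex_onD[OF cf, of u "x + s *\<^sub>R (z - x)" "x + t *\<^sub>R (z - x)"] \<open>0<u\<close> \<open>u<1\<close> eq
      by simp
  qed simp
  have lin: "linear f'" using d by (simp add: has_derivative_linear)
  have "((\<lambda>t. x + t *\<^sub>R (z - x)) has_derivative (\<lambda>t. t *\<^sub>R (z - x))) (at 0)"
    by (auto intro!: derivative_eq_intros)
  from has_derivative_compose[OF this, of f f'] d
  have "(\<phi> has_derivative (\<lambda>t. f' (t *\<^sub>R (z - x)))) (at 0)"
    unfolding \<phi>_def by (simp add: o_def)
  moreover have "(\<lambda>t. f' (t *\<^sub>R (z - x))) = (\<lambda>t. t * f' (z - x))"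
    using lin by (simp add: linear_scale)
  ultimately have "(\<phi> has_field_derivative f' (z - x)) (at 0)"
    by (simp add: has_field_derivative_def mult.commute[of _ "f' (z - x)"])
  then have "\<phi> 1 - \<phi> 0 \<ge> f' (z - x) * (1 - 0)"
    by (intro convex_on_imp_above_tangent[OF cphi]) auto
  then show ?thesis by (simp add: \<phi>_def)
qed


lemma g_lb:
  assumes "closed_proper_convex_bdd g D"
  shows "\<exists>c. \<forall>x\<in>D. c \<le> g x"
proof -
  let ?E = "{(x, t). x \<in> D \<and> g x \<le> t}"
  from assms have ne: "D \<noteq> {}" and cD: "convex D" and cg: "convex_on D g" and bD: "bounded D"
    and clE: "closed ?E" unfolding closed_proper_convex_bdd_def by auto
  obtain x0 where x0: "x0 \<in> D" using ne by auto
  let ?p = "(x0, g x0 - 1)"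
  have "?p \<in> - ?E" by auto
  moreover have "open (- ?E)" using clE by auto
  ultimately obtain e where e: "e > 0" "ball ?p e \<subseteq> - ?E" by (meson open_contains_ball)
  obtain B where B: "B > 0" "\<forall>x\<in>D. norm (x - x0) \<le> B"
  proof -
    from bD obtain B0 where "\<forall>x\<in>D. norm x \<le> B0" by (auto simp: bounded_iff)
    then have "\<forall>x\<in>D. norm (x - x0) \<le> 2 * B0" using x0 norm_triangle_ineq4
      by (smt (verit))
    then show ?thesis using that[of "max 1 (2*B0)"] by force
  qed
  define K where "K = max 1 (2 * B / e)"
  have K1: "K \<ge> 1" and KB: "B / K \<le> e / 2"
  proof -
    show "K \<ge> 1" by (simp add: K_def)
    have "2 * B / e \<le> K" by (simp add: K_def)
    then have "2 * B \<le> K * e" using e by (simp add: divide_le_eq)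
    then show "B / K \<le> e / 2" using \<open>K \<ge> 1\<close> by (simp add: divide_le_eq mult.commute)
  qed
  have "\<forall>x\<in>D. g x0 - K \<le> g x"
  proof (rule ccontr)
    assume "\<not> ?thesis"
    then obtain x where x: "x \<in> D" "g x < g x0 - K" by auto
    define t where "t = 1 / K"
    have t: "0 < t" "t \<le> 1" using K1 by (auto simp: t_def)
    define y where "y = (1 - t) *\<^sub>R x0 + t *\<^sub>R x"
    have yD: "y \<in> D" using cD x0 x t unfolding y_def by (simp add: convexD_alt)
    have "g y \<le> (1 - t) * g x0 + t * g x"
      using convex_onD[OF cg, of t x0 x] t x0 x unfolding y_def by simp
    also have "\<dots> \<le> (1 - t) * g x0 + t * (g x0 - K)"
      using x t by (intro add_left_mono mult_left_mono) auto
    also have "\<dots> = g x0 - 1" using K1 by (simp add: t_def algebra_simps)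
    finally have "(y, g x0 - 1) \<in> ?E" using yD by auto
    moreover have "dist ?p (y, g x0 - 1) < e"
    proof -
      have "dist ?p (y, g x0 - 1) = dist x0 y" by (simp add: dist_Pair_Pair)
      also have "\<dots> = norm (t *\<^sub>R (x - x0))" unfolding y_def dist_norm
        by (simp add: algebra_simps norm_minus_commute)
      also have "\<dots> = t * norm (x - x0)" using t by simp
      also have "\<dots> \<le> t * B" using B x t by (intro mult_left_mono) auto
      also have "\<dots> = B / K" by (simp add: t_def)
      finally show ?thesis using KB e by linarith
    qed
    ultimately show False using e by auto
  qed
  then show ?thesis by blast
qed

theorem lemma1:
  fixes f g :: "real^'n \<Rightarrow> real" and D :: "(real^'n) set"
    and A :: "real^'n^'m" and b :: "real^'m" and \<beta> :: real
    and gradf :: "real^'n \<Rightarrow> real^'n"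
    and gradfhat :: "real^'n \<Rightarrow> real^'m \<Rightarrow> real^'n"
    and x :: "nat \<Rightarrow> real^'n" and lam :: "nat \<Rightarrow> real^'m" and eta :: "nat \<Rightarrow> real"
  assumes f_convex: "convex_on UNIV f"
    and f_grad: "\<And>z. (f has_derivative (\<lambda>h. inner (gradf z) h)) (at z)"
    and f_lip: "\<exists>L. \<forall>y z. norm (gradf y - gradf z) \<le> L * norm (y - z)"
    and g_cpc: "closed_proper_convex_bdd g D"
    and beta_pos: "\<beta> > 0"
    and fhat_grad: "\<And>z mu. ((\<lambda>y. fhat f A b \<beta> mu y) has_derivative (\<lambda>h. inner (gradfhat z mu) h)) (at z)"
    and x1: "x 1 \<in> D"
    and eta_nonneg: "\<And>k. eta k \<ge> 0"
    and x_in: "\<And>k. k \<ge> 1 \<Longrightarrow> x (Suc k) \<in> D"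
    and x_inexact: "\<And>k. k \<ge> 1 \<Longrightarrow>
        (\<forall>z\<in>D. inner (gradfhat (x (Suc k)) (lam k)) (x (Suc k) - z) + g (x (Suc k)) - g z \<le> eta k)"
    and lam_upd: "\<And>k. k \<ge> 1 \<Longrightarrow> lam (Suc k) = lam k + \<beta> *\<^sub>R (A *v x (Suc k) - b)"
  shows "(\<forall>nu mu xmu. xmu \<in> D \<longrightarrow>
            dual f g D A b \<beta> nu \<le> Lag f g A b \<beta> mu xmu + inner (A *v xmu - b) (nu - mu))
       \<and> (\<forall>k\<ge>1. dual f g D A b \<beta> (lam (Suc k)) \<ge>
            Lag f g A b \<beta> (lam k) (x (Suc k)) + \<beta> / 2 * (norm (A *v x (Suc k) - b))\<^sup>2 - eta k)"
proof -
  have bdd: "bdd_below (Lag f g A b \<beta> nu ` D)" for nu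
  proof -
    from g_cpc have bD: "bounded D" unfolding closed_proper_convex_bdd_def by auto
    obtain c where c: "\<forall>x\<in>D. c \<le> g x" using g_lb[OF g_cpc] by blast
    have "continuous_on UNIV (fhat f A b \<beta> nu)"
      using fhat_grad has_derivative_continuous continuous_at_imp_continuous_on by blast
    then have "compact (fhat f A b \<beta> nu ` closure D)"
      using bD compact_closure by (metis compact_continuous_image continuous_on_subset subset_UNIV)
    then obtain M where M: "\<forall>y\<in>fhat f A b \<beta> nu ` closure D. norm y \<le> M"
      using compact_imp_bounded bounded_iff by metis
    have "\<forall>x\<in>D. - M + c \<le> Lag f g A b \<beta> nu x"
    proof
      fix x assume "x \<in> D"
      then have "norm (fhat f A b \<beta> nu x) \<le> M" using M closure_subset by blast
      then show "- M + c \<le> Lag f g A b \<beta> nu x" using c \<open>x\<in>D\<close> unfolding Lag_def by auto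
    qed
    then show ?thesis by (auto simp: bdd_below_def)
  qed
  have part1: "\<forall>nu mu xmu. xmu \<in> D \<longrightarrow>
            dual f g D A b \<beta> nu \<le> Lag f g A b \<beta> mu xmu + inner (A *v xmu - b) (nu - mu)"
  proof (intro allI impI)
    fix nu mu xmu assume "xmu \<in> D"
    then have "dual f g D A b \<beta> nu \<le> Lag f g A b \<beta> nu xmu"
      unfolding dual_def by (intro cInf_lower bdd) auto
    also have "\<dots> = Lag f g A b \<beta> mu xmu + inner (A *v xmu - b) (nu - mu)"
      unfolding Lag_def fhat_def by (simp add: inner_diff_right inner_commute)
    finally show "dual f g D A b \<beta> nu \<le> Lag f g A b \<beta> mu xmu + inner (A *v xmu - b) (nu - mu)" .
  qed
  have part2: "dual f g D A b \<beta> (lam (Suc k)) \<ge>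
            Lag f g A b \<beta> (lam k) (x (Suc k)) + \<beta> / 2 * (norm (A *v x (Suc k) - b))\<^sup>2 - eta k"
    if k: "k \<ge> 1" for k
  proof -
    define xp where "xp = x (Suc k)"
    define l where "l = lam k"
    define r where "r = A *v xp - b"
    define G where "G = gradfhat xp l"
    have lp: "lam (Suc k) = l + \<beta> *\<^sub>R r" using lam_upd[OF k] by (simp add: l_def r_def xp_def)
    have ne: "D \<noteq> {}" using g_cpc unfolding closed_proper_convex_bdd_def by auto
    have dA: "((*v) A has_derivative (*v) A) (at xp)"
      by (simp add: bounded_linear_imp_has_derivative)
    have d1: "((\<lambda>y. fhat f A b \<beta> l y) has_derivative
       (\<lambda>h. inner (gradf xp) h + inner l (A *v h) + \<beta> / 2 * (2 * inner (A *v xp - b) (A *v h)))) (at xp)"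
      unfolding fhat_def power2_norm_eq_inner
      by (auto intro!: derivative_eq_intros f_grad dA simp: matrix_vector_right_distrib inner_commute)
    have Geq: "inner G h = inner (gradf xp) h + inner l (A *v h) + \<beta> * inner r (A *v h)" for h
    proof -
      have "(\<lambda>h. inner G h) = (\<lambda>h. inner (gradf xp) h + inner l (A *v h) + \<beta> / 2 * (2 * inner (A *v xp - b) (A *v h)))"
        using has_derivative_unique[OF fhat_grad[where z=xp and mu=l] d1] by (simp add: G_def)
      from fun_cong[OF this, of h] show ?thesis by (simp add: r_def)
    qed
    show ?thesis
      unfolding xp_def[symmetric] l_def[symmetric] r_def[symmetric] lp dual_def
    proof (rule cINF_greatest[OF ne])
      fix z assume z: "z \<in> D"
      define rz where "rz = A *v z - b"
      have Az: "A *v (z - xp) = rz - r" by (simp add: rz_def r_def matrix_vector_mult_diff_distrib)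
      have fz: "f z - f xp \<ge> inner (gradf xp) (z - xp)"
        using grad_ineq[OF f_convex f_grad] .
      have gz: "inner G (xp - z) + g xp - g z \<le> eta k"
        using x_inexact[OF k] z by (simp add: G_def xp_def l_def)
      have "inner G (xp - z) = - inner G (z - xp)"
        by (metis inner_minus_right minus_diff_eq)
      with gz Geq[of "z - xp"] Az have gz2:
        "g z \<ge> g xp - eta k - inner (gradf xp) (z - xp) - inner l (rz - r) - \<beta> * inner r (rz - r)"
        by simp
      have sq: "0 \<le> \<beta> / 2 * (norm rz)\<^sup>2" using beta_pos by simp
      have "Lag f g A b \<beta> l xp + \<beta> / 2 * (norm r)\<^sup>2 - eta k
            = f xp + inner l r + \<beta> * inner r r + g xp - eta k"
        unfolding Lag_def fhat_def r_def[symmetric] power2_norm_eq_inner by simp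
      also have "\<dots> \<le> f z + inner (l + \<beta> *\<^sub>R r) rz + \<beta> / 2 * (norm rz)\<^sup>2 + g z"
        using fz gz2 sq by (simp add: inner_diff_right inner_add_left inner_commute algebra_simps)
      also have "\<dots> = Lag f g A b \<beta> (l + \<beta> *\<^sub>R r) z"
        unfolding Lag_def fhat_def rz_def by simp
      finally show "Lag f g A b \<beta> l xp + \<beta> / 2 * (norm r)\<^sup>2 - eta k \<le> Lag f g A b \<beta> (l + \<beta> *\<^sub>R r) z" .
    qed
  qed
  show ?thesis using part1 part2 by blast
qed

end
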